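(* Let $A\in\mathbb{C}^{n\times n}$, $k=\mathrm{Ind}(A)$, let $l\ge k$ be an integer and $m\in\mathbb{N}=\{1,2,\dots\}$. Then: (a) $A^{\#_m}AA^{\#_m}=A^{\#_m}$; (b) $A_1A^{\#_m}A_1=A_1$ and $A^{\#_m}A_1A^{\#_m}=A^{\#_m}$, where $A_1=AA^{\mathrm{cEP}}A$; (c) $A(A^{\#_m})^2=A^{\#_m}$; (d) $A^{\#_m}A^{l+1}=A^l$; (e) $A^{\#_m}=(A^d)^{m+1}P_{A^l}A^mP_{A^m}$; (f) $A^{\#_m}=A^l(A^{l+m+1})^\dagger A^mP_{A^m}$; (g) $\mathrm{rk}(A^{\#_m})=\mathrm{rk}(A^k)$; (h) $\mathcal{R}(A^{\#_m})=\mathcal{R}(A^k)$; (i) $\mathcal{N}(A^{\#_m})=\mathcal{N}((A^k)^*A^mP_{A^m})$; (j) $A^{\#_m}A^{m+1}=(A^{\mathrm{cEP}})^{m+1}A^{2m+1}$.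
   Context: For $A\in\mathbb{C}^{n\times n}$: $A^*$ conjugate transpose, $A^\dagger$ Moore–Penrose inverse, $\mathcal{R}(\cdot)$, $\mathcal{N}(\cdot)$ column space and null space, $\mathrm{rk}$ rank, $P_A=AA^\dagger$, $A^0=I_n$. The index $\mathrm{Ind}(A)$ is the smallest nonnegative integer $k$ with $\mathcal{R}(A^k)=\mathcal{R}(A^{k+1})$. $A^d$ is the Drazin inverse (unique $X$ with $XAX=X$, $AX=XA$, $XA^{k+1}=A^k$). The core-EP inverse $A^{\mathrm{cEP}}$ is the unique $X$ with $XAX=X$ and $\mathcal{R}(X)=\mathcal{R}(X^* )=\mathcal{R}(A^k)$. For $m\in\mathbb{N}$, the $m$-weak group inverse is $A^{\mathrm{WG}_m}:=(A^{\mathrm{cEP}})^{m+1}A^m$ and the $m$-weak core inverse is $A^{\#_m}:=A^{\mathrm{WG}_m}P_{A^m}$. *)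

theory Defs
  imports "HOL-Analysis.Analysis"
begin

type_synonym 'n cmat = "complex^'n^'n"

definition cstar :: "complex^'n^'m \<Rightarrow> complex^'m^'n" where
  "cstar A = (\<chi> i j. cnj (A $ j $ i))"

fun mpow :: "'n cmat \<Rightarrow> nat \<Rightarrow> ('n::finite) cmat" where
  "mpow A 0 = mat 1"
| "mpow A (Suc k) = A ** mpow A k"

definition colsp :: "complex^'n^'m \<Rightarrow> (complex^'m) set" where
  "colsp A = range (\<lambda>x. A *v x)"

definition nullsp :: "complex^'n^'m \<Rightarrow> (complex^'n) set" where
  "nullsp A = {x. A *v x = 0}"

definition mp_inv :: "complex^'n^'m \<Rightarrow> complex^'m^'n" where
  "mp_inv A = (THE X. A ** X ** A = A \<and> X ** A ** X = X \<and>
                      cstar (A ** X) = A ** X \<and> cstar (X ** A) = X ** A)"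

definition proj :: "('n::finite) cmat \<Rightarrow> 'n cmat" where
  "proj A = A ** mp_inv A"

definition ind :: "('n::finite) cmat \<Rightarrow> nat" where
  "ind A = (LEAST k. colsp (mpow A k) = colsp (mpow A (Suc k)))"

definition drazin :: "('n::finite) cmat \<Rightarrow> 'n cmat" where
  "drazin A = (THE X. X ** A ** X = X \<and> A ** X = X ** A \<and>
                      X ** mpow A (Suc (ind A)) = mpow A (ind A))"

definition coreEP :: "('n::finite) cmat \<Rightarrow> 'n cmat" where
  "coreEP A = (THE X. X ** A ** X = X \<and> colsp X = colsp (mpow A (ind A)) \<and>
                      colsp (cstar X) = colsp (mpow A (ind A)))"

definition mWG :: "nat \<Rightarrow> ('n::finite) cmat \<Rightarrow> 'n cmat" where
  "mWG m A = mpow (coreEP A) (Suc m) ** mpow A m"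

definition mWC :: "nat \<Rightarrow> ('n::finite) cmat \<Rightarrow> 'n cmat" where
  "mWC m A = mWG m A ** proj (mpow A m)"

end

theory Submission
  imports Defs
begin


lemma mpow_add: "mpow A (a + b) = mpow A a ** mpow A b"
  by (induction a) (auto simp: matrix_mul_assoc)

lemma mpow_Suc': "mpow A (Suc k) = mpow A k ** A"
  by (induction k) (auto simp: matrix_mul_assoc)

lemma mpow_comm_gen: "A ** X = X ** A \<Longrightarrow> mpow A k ** X = X ** mpow A k"
  by (induction k) (auto, metis matrix_mul_assoc)

lemma mpow_1[simp]: "mpow A 1 = A" by simp

lemma cstar_mult: "cstar ((A::complex^'n^'m) ** (B::complex^'p^'n)) = cstar B ** cstar A"
  by (simp add: cstar_def matrix_matrix_mult_def vec_eq_iff mult.commute)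

lemma cstar_cstar[simp]: "cstar (cstar A) = A"
  by (simp add: cstar_def vec_eq_iff)

lemma cstar_mat1[simp]: "cstar (mat 1 :: complex^'n^'n) = mat 1"
  by (simp add: cstar_def vec_eq_iff mat_def)

lemma inner_cvec: "(x::complex^'n) \<bullet> y = Re (\<Sum>i\<in>UNIV. x$i * cnj (y$i))"
  by (simp add: inner_vec_def inner_complex_def)

lemma adjoint: "((M::complex^'n^'m) *v x) \<bullet> y = x \<bullet> (cstar M *v y)"
proof -
  have "(\<Sum>i\<in>UNIV. (M *v x)$i * cnj (y$i)) = (\<Sum>i\<in>UNIV. \<Sum>j\<in>UNIV. M$i$j * x$j * cnj (y$i))"
    by (simp add: matrix_vector_mult_def sum_distrib_right)
  also have "\<dots> = (\<Sum>j\<in>UNIV. \<Sum>i\<in>UNIV. M$i$j * x$j * cnj (y$i))"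
    by (rule sum.swap)
  also have "\<dots> = (\<Sum>j\<in>UNIV. x$j * cnj ((cstar M *v y)$j))"
    by (simp add: matrix_vector_mult_def cstar_def sum_distrib_left mult_ac)
  finally show ?thesis by (simp add: inner_cvec)
qed

lemma mv_axis: "((B::'a::semiring_1^'n^'m) *v axis j 1) $ i = B$i$j"
  by (simp add: matrix_vector_mult_def axis_def if_distrib cong: if_cong)

lemma colsp_mult: "colsp (A ** B) \<subseteq> colsp A"
  by (auto simp: colsp_def matrix_vector_mul_assoc[symmetric])

lemma colsp_subspace: "subspace (colsp (M::complex^'n^'m))"
  unfolding colsp_def
  by (rule real_vector.linear_subspace_image[OF matrix_vector_mul_linear subspace_UNIV])

lemma factor:
  fixes B :: "complex^'p^'m" and C :: "complex^'q^'m"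
  assumes "colsp B \<subseteq> colsp C"
  shows "\<exists>Z::complex^'p^'q. B = C ** Z"
proof -
  have "\<forall>j. \<exists>z. B *v axis j 1 = C *v z"
    using assms by (auto simp: colsp_def)
  then obtain f where f: "\<And>j. B *v axis j 1 = C *v f j" by metis
  define Z :: "complex^'p^'q" where "Z = (\<chi> i j. f j $ i)"
  have "B = C ** Z"
  proof (simp add: vec_eq_iff, intro allI)
    fix i j
    have "B$i$j = (C *v f j) $ i" using f[of j] mv_axis[of B j i] by simp
    then show "B$i$j = (C ** Z)$i$j"
      by (simp add: matrix_matrix_mult_def matrix_vector_mult_def Z_def)
  qed
  then show ?thesis by blast
qed

lemma factor_colsp: "B = C ** Z \<Longrightarrow> colsp B \<subseteq> colsp C"
  using colsp_mult by blast

lemma ident_on: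
  assumes "E ** K = K" "colsp M \<subseteq> colsp K"
  shows "E ** M = M"
proof -
  obtain Z where "M = K ** Z" using factor[OF assms(2)] by blast
  then show ?thesis using assms(1) by (metis matrix_mul_assoc)
qed

lemma key_orth:
  fixes B :: "complex^'n^'m"
  shows "colsp (cstar B) \<subseteq> colsp (cstar B ** B)"
proof
  fix y assume y: "y \<in> colsp (cstar B)"
  let ?S = "colsp (cstar B ** B)"
  have spS: "span ?S = ?S" using colsp_subspace span_eq_iff by blast
  obtain s t where s: "s \<in> span ?S" and t: "\<And>w. w \<in> span ?S \<Longrightarrow> orthogonal t w" and yst: "y = s + t"
    using orthogonal_subspace_decomp_exists by metis
  have "s \<in> colsp (cstar B)" using s spS colsp_mult by blast
  then have "t \<in> colsp (cstar B)" using y yst colsp_subspace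
    by (metis add_diff_cancel_left' subspace_diff)
  then obtain u where u: "t = cstar B *v u" by (auto simp: colsp_def)
  have "(cstar B ** B) *v t \<in> ?S" by (auto simp: colsp_def)
  then have "(cstar B ** B) *v t \<in> span ?S" by (rule span_base)
  then have "t \<bullet> ((cstar B ** B) *v t) = 0" using t orthogonal_def by blast
  then have "(B *v t) \<bullet> (B *v t) = 0"
    by (simp add: adjoint matrix_vector_mul_assoc)
  then have Bt: "B *v t = 0" by simp
  have "t \<bullet> t = (B *v t) \<bullet> u" using u adjoint by metis
  then have "t = 0" using Bt by simp
  then show "y \<in> ?S" using yst s spS by simp
qed

lemma herm_proj:
  fixes B :: "complex^'n^'m"
  assumes W: "cstar B = cstar B ** B ** W"
  shows "cstar (B ** W) = B ** W" "B ** W ** (B ** W) = B ** W" "B ** W ** B = B"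
proof -
  let ?P = "B ** W"
  have 1: "cstar ?P ** ?P = cstar ?P"
    by (metis W cstar_mult matrix_mul_assoc)
  have 2: "?P = cstar ?P"
    by (metis 1 cstar_cstar cstar_mult)
  have 3: "cstar ?P = ?P" by (rule sym[OF 2])
  show "cstar ?P = ?P" by (rule 3)
  show "?P ** ?P = ?P" using 1 by (simp only: 3)
  have "B = cstar (cstar B)" by simp
  also have "\<dots> = cstar (cstar B ** B ** W)" using W by simp
  also have "\<dots> = cstar W ** cstar B ** B" by (simp add: cstar_mult matrix_mul_assoc)
  also have "\<dots> = cstar ?P ** B" by (simp add: cstar_mult)
  finally show "?P ** B = B" by (simp only: 3)
qed

lemma mp_exists:
  fixes B :: "complex^'n^'m"
  shows "\<exists>X. B ** X ** B = B \<and> X ** B ** X = X \<and> cstar (B ** X) = B ** X \<and> cstar (X ** B) = X ** B"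
proof -
  obtain W where W: "cstar B = cstar B ** B ** W"
    using factor[OF key_orth[of B]] by (metis matrix_mul_assoc)
  obtain V where V: "cstar (cstar B) = cstar (cstar B) ** cstar B ** V"
    using factor[OF key_orth[of "cstar B"]] by (metis matrix_mul_assoc)
  define P where "P = B ** W"
  define Q where "Q = cstar B ** V"
  have P1: "cstar P = P" "P ** P = P" "P ** B = B" using herm_proj[OF W] P_def by auto
  have Q1: "cstar Q = Q" "Q ** Q = Q" "Q ** cstar B = cstar B" using herm_proj[OF V] Q_def by auto
  have BQ: "B ** Q = B" using arg_cong[OF Q1(3), of cstar] by (simp add: cstar_mult Q1(1))
  have Q2: "Q = cstar V ** B" using Q1(1) Q_def by (metis cstar_mult cstar_cstar)
  define X where "X = Q ** W ** P"
  have BX: "B ** X = P"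
    by (simp add: X_def matrix_mul_assoc BQ P_def[symmetric] P1(2))
  have QWB: "Q ** W ** B = Q"
    by (metis Q2 P_def P1(3) matrix_mul_assoc)
  have XB: "X ** B = Q"
    by (metis X_def P1(3) QWB matrix_mul_assoc)
  show ?thesis
  proof (intro exI conjI)
    show "B ** X ** B = B" using BX P1(3) by simp
    show "X ** B ** X = X" using XB by (metis BX X_def P1(2) Q1(2) matrix_mul_assoc)
    show "cstar (B ** X) = B ** X" using BX P1(1) by simp
    show "cstar (X ** B) = X ** B" using XB Q1(1) by simp
  qed
qed

lemma mp_unique:
  fixes B :: "complex^'n^'m"
  assumes "B ** X ** B = B" "X ** B ** X = X" "cstar (B ** X) = B ** X" "cstar (X ** B) = X ** B"
      and "B ** Y ** B = B" "Y ** B ** Y = Y" "cstar (B ** Y) = B ** Y" "cstar (Y ** B) = Y ** B"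
  shows "X = Y"
proof -
  have "X = X ** (B ** X)" using assms(2) by (simp add: matrix_mul_assoc)
  also have "\<dots> = X ** cstar (B ** X)" using assms(3) by simp
  also have "\<dots> = X ** cstar X ** cstar (B ** Y ** B)" using assms(5) by (simp add: cstar_mult matrix_mul_assoc)
  also have "\<dots> = X ** cstar (B ** X) ** cstar (B ** Y)" by (simp add: cstar_mult matrix_mul_assoc)
  also have "\<dots> = X ** B ** X ** B ** Y" using assms(3,7) by (simp add: matrix_mul_assoc)
  also have "\<dots> = X ** B ** Y" using assms(2) by simp
  finally have 1: "X = X ** B ** Y" .
  have "Y = (Y ** B) ** Y" using assms(6) by simp
  also have "\<dots> = cstar (Y ** B) ** Y" using assms(8) by simp
  also have "\<dots> = cstar (B ** X ** B) ** cstar Y ** Y" using assms(1) by (simp add: cstar_mult matrix_mul_assoc)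
  also have "\<dots> = cstar (X ** B) ** cstar (Y ** B) ** Y" by (simp add: cstar_mult matrix_mul_assoc)
  also have "\<dots> = X ** B ** Y ** B ** Y" using assms(4,8) by (simp add: matrix_mul_assoc)
  also have "\<dots> = X ** B ** Y" using assms(6) by (metis matrix_mul_assoc)
  finally show ?thesis using 1 by simp
qed

lemma mp_props:
  fixes B :: "complex^'n^'m"
  shows "B ** mp_inv B ** B = B" "mp_inv B ** B ** mp_inv B = mp_inv B"
        "cstar (B ** mp_inv B) = B ** mp_inv B" "cstar (mp_inv B ** B) = mp_inv B ** B"
proof -
  obtain X where X: "B ** X ** B = B \<and> X ** B ** X = X \<and> cstar (B ** X) = B ** X \<and> cstar (X ** B) = X ** B"
    using mp_exists by blast
  have "B ** mp_inv B ** B = B \<and> mp_inv B ** B ** mp_inv B = mp_inv B \<and>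
        cstar (B ** mp_inv B) = B ** mp_inv B \<and> cstar (mp_inv B ** B) = mp_inv B ** B"
    unfolding mp_inv_def
    by (rule theI[of _ X]) (use X mp_unique in blast)+
  then show "B ** mp_inv B ** B = B" "mp_inv B ** B ** mp_inv B = mp_inv B"
        "cstar (B ** mp_inv B) = B ** mp_inv B" "cstar (mp_inv B ** B) = mp_inv B ** B" by auto
qed



lemma colsp_mpow_le: "j \<le> i \<Longrightarrow> colsp (mpow A i) \<subseteq> colsp (mpow A j)"
proof -
  assume "j \<le> i"
  then obtain d where "i = j + d" using le_Suc_ex by blast
  then have "mpow A i = mpow A j ** mpow A d" by (simp add: mpow_add)
  then show ?thesis by (simp add: colsp_mult)
qed

lemma colsp_Suc_image: "colsp (mpow A (Suc k)) = (\<lambda>x. A *v x) ` colsp (mpow A k)"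
  by (auto simp: colsp_def matrix_vector_mul_assoc[symmetric] image_image)

lemma stab:
  assumes "colsp (mpow A k) = colsp (mpow A (Suc k))"
  shows "colsp (mpow A (k + j)) = colsp (mpow A k)"
proof (induction j)
  case 0 then show ?case by simp
next
  case (Suc j)
  have "colsp (mpow A (k + Suc j)) = (\<lambda>x. A *v x) ` colsp (mpow A (k + j))"
    using colsp_Suc_image by simp
  also have "\<dots> = (\<lambda>x. A *v x) ` colsp (mpow A k)" using Suc by simp
  also have "\<dots> = colsp (mpow A k)" using colsp_Suc_image[of A k] assms by simp
  finally show ?case .
qed

lemma ind_exists: "\<exists>k. colsp (mpow A k) = colsp (mpow A (Suc k))"
proof (rule ccontr)
  assume "\<nexists>k. colsp (mpow A k) = colsp (mpow A (Suc k))"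
  moreover have "colsp (mpow A (Suc k)) \<subseteq> colsp (mpow A k)" for k
    by (rule colsp_mpow_le) simp
  ultimately have ne: "\<And>k. colsp (mpow A (Suc k)) \<subset> colsp (mpow A k)"
    by blast
  have "dim (colsp (mpow A k)) + k \<le> DIM(complex^'a)" for k
  proof (induction k)
    case 0
    have "dim (colsp (mpow A 0)) \<le> DIM(complex^'a)" by (rule dim_subset_UNIV)
    then show ?case by simp
  next
    case (Suc k)
    have "span (colsp (mpow A (Suc k))) \<subset> span (colsp (mpow A k))"
    proof -
      have e: "span (colsp M) = colsp M" for M :: "complex^'a^'a"
        using span_eq_iff colsp_subspace by blast
      show ?thesis using ne[of k] by (simp only: e)
    qed
    then have "dim (colsp (mpow A (Suc k))) < dim (colsp (mpow A k))"
      by (rule dim_psubset)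
    then show ?case using Suc by simp
  qed
  from this[of "Suc DIM(complex^'a)"] show False by simp
qed

lemma ind_prop: "colsp (mpow A (ind A)) = colsp (mpow A (Suc (ind A)))"
  unfolding ind_def using ind_exists by (rule LeastI_ex)

lemma ind_ge: "ind A \<le> j \<Longrightarrow> colsp (mpow A j) = colsp (mpow A (ind A))"
  using stab[OF ind_prop, of A "j - ind A"] by simp

lemma ind_le: "j \<le> ind A \<Longrightarrow> colsp (mpow A (ind A)) \<subseteq> colsp (mpow A j)"
  by (rule colsp_mpow_le)

lemma colsp_K_sub: "colsp (mpow A (ind A)) \<subseteq> colsp (mpow A j)"
proof (cases "j \<le> ind A")
  case True then show ?thesis by (rule ind_le)
next
  case False then have "ind A \<le> j" by simp
  from ind_ge[OF this] show ?thesis by simp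
qed

lemma ker_triv:
  fixes f :: "'a::euclidean_space \<Rightarrow> 'a"
  assumes lf: "linear f" and S: "subspace S" and fS: "f ` S = S" and x: "x \<in> S" "f x = 0"
  shows "x = 0"
proof (rule ccontr)
  assume nz: "x \<noteq> 0"
  have "{x} \<subseteq> S" "independent {x}" using x nz by auto
  then obtain B where B: "{x} \<subseteq> B" "B \<subseteq> S" "independent B" "S \<subseteq> span B"
    using maximal_independent_subset_extend[of "{x}" S] by blast
  have fin: "finite B" using B(3) finiteI_independent by blast
  have cardB: "card B = dim S" using basis_card_eq_dim[OF B(2) B(4) B(3)] .
  have "S \<subseteq> f ` span B" using fS B(4) by blast
  also have "\<dots> = span (f ` B)" using span_linear_image[OF lf] by simp
  also have "\<dots> \<subseteq> span (insert 0 (f ` (B - {x})))"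
    by (rule span_mono) (use x in auto)
  also have "\<dots> = span (f ` (B - {x}))" by (simp add: span_insert_0)
  finally have "dim S \<le> card (f ` (B - {x}))"
    by (rule dim_le_card) (use fin in auto)
  also have "\<dots> \<le> card (B - {x})" by (rule card_image_le) (use fin in auto)
  also have "\<dots> = card B - 1" using B(1) fin by simp
  finally show False using cardB B(1) fin
    by (metis One_nat_def Suc_pred card_gt_0_iff diff_Suc_less empty_iff insert_subset leD)
qed

lemma A_surj: "(*v) A ` colsp (mpow A (ind A)) = colsp (mpow A (ind A))"
proof -
  have "(*v) A ` colsp (mpow A (ind A)) = colsp (mpow A (Suc (ind A)))"
    by (rule colsp_Suc_image[symmetric])
  also have "\<dots> = colsp (mpow A (ind A))" by (rule ind_prop[symmetric])
  finally show ?thesis .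
qed

lemma A_ker:
  assumes "x \<in> colsp (mpow A (ind A))" "A *v x = 0"
  shows "x = 0"
  by (rule ker_triv[OF matrix_vector_mul_linear colsp_subspace A_surj assms])

lemma A_image: "x \<in> colsp (mpow A (ind A)) \<Longrightarrow> A *v x \<in> colsp (mpow A (ind A))"
  using A_surj[of A] by blast

lemma Apow_ker: "x \<in> colsp (mpow A (ind A)) \<Longrightarrow> mpow A j *v x = 0 \<Longrightarrow> x = 0"
proof (induction j arbitrary: x)
  case 0 then show ?case by simp
next
  case (Suc j)
  have "mpow A j *v (A *v x) = 0" using Suc.prems(2) unfolding mpow_Suc' by (simp add: matrix_vector_mul_assoc)
  then have "A *v x = 0" using Suc.IH A_image Suc.prems(1) by blast
  then show ?case using A_ker Suc.prems(1) by blast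
qed

lemma colsp_mem: "M *v x \<in> colsp M" by (auto simp: colsp_def)

lemma Apow_ker_eq:
  assumes "colsp M \<subseteq> colsp (mpow A (ind A))" "colsp N \<subseteq> colsp (mpow A (ind A))"
      and "mpow A j ** M = mpow A j ** N"
  shows "M = N"
proof -
  have "M *v x = N *v x" for x
  proof -
    have "M *v x - N *v x \<in> colsp (mpow A (ind A))"
      using assms(1,2) colsp_mem colsp_subspace by (metis subsetD subspace_diff)
    moreover have "mpow A j *v (M *v x - N *v x) = 0"
      using assms(3) by (simp add: matrix_vector_mult_diff_distrib matrix_vector_mul_assoc)
    ultimately have "M *v x - N *v x = 0" by (rule Apow_ker)
    then show ?thesis by simp
  qed
  then show ?thesis by (subst matrix_eq) blast
qed



lemma lassoc: "B ** C = D \<Longrightarrow> X ** B ** C = X ** D"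
  by (metis matrix_mul_assoc)

lemma lassoc3: "B ** C ** E = D \<Longrightarrow> X ** B ** C ** E = X ** D"
  by (metis matrix_mul_assoc)

lemma mpow_comm_A: "mpow A i ** mpow A j = mpow A j ** mpow A i"
  by (metis add.commute mpow_add)

lemma A_mpow_comm: "A ** mpow A j = mpow A j ** A"
  by (metis mpow.simps(2) mpow_Suc')

lemma drazin_exists:
  "\<exists>X. X ** A ** X = X \<and> A ** X = X ** A \<and> X ** mpow A (Suc (ind A)) = mpow A (ind A)"
proof -
  define k where "k = ind A"
  define K where "K = mpow A k"
  define T where "T = mpow A (2*k+1)"
  define A1 where "A1 = mpow A (Suc k)"
  have S: "colsp K \<subseteq> colsp T"
    using ind_ge[of A "2*k+1"] unfolding k_def K_def T_def by simp
  obtain Y where Y: "K = T ** Y" using factor[OF S] by blast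
  have T1: "A1 ** K = T"
  proof -
    have "T = mpow A (Suc k + k)" unfolding T_def by (rule arg_cong[where f="mpow A"]) simp
    then show ?thesis unfolding A1_def K_def by (simp only: mpow_add)
  qed
  have T2: "K ** A1 = T"
  proof -
    have "T = mpow A (k + Suc k)" unfolding T_def by (rule arg_cong[where f="mpow A"]) simp
    then show ?thesis unfolding A1_def K_def by (simp only: mpow_add)
  qed
  have Y': "T ** Y = K" using Y by simp
  have AK: "A ** K = A1" unfolding A1_def K_def by simp
  have KA: "K ** A = A1" unfolding A1_def K_def by (rule mpow_Suc'[symmetric])
  have KA': "K ** A = A ** K" using AK KA by simp
  have AA1: "A1 ** A = A ** A1" unfolding A1_def by (rule A_mpow_comm[symmetric])
  have colK: "colsp (K ** Z) \<subseteq> colsp (mpow A (ind A))" for Z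
    using colsp_mult unfolding K_def k_def by blast
  define D where "D = K ** Y"
  have D1: "K ** Y ** A1 = K"
  proof (rule Apow_ker_eq[where j = "Suc k"])
    show "colsp (K ** Y ** A1) \<subseteq> colsp (mpow A (ind A))"
      using colK by (simp add: matrix_mul_assoc[symmetric])
    show "colsp K \<subseteq> colsp (mpow A (ind A))" using colK[of "mat 1"] by simp
    have "A1 ** (K ** Y ** A1) = A1 ** K"
      by (simp only: matrix_mul_assoc T1 Y' T2 lassoc[OF T1] lassoc[OF Y'] lassoc[OF T2])
    then show "mpow A (Suc k) ** (K ** Y ** A1) = mpow A (Suc k) ** K" unfolding A1_def .
  qed
  have D2: "A ** D = D ** A"
  proof (rule Apow_ker_eq[where j = "Suc k"])
    have "A ** D = K ** (A ** Y)" unfolding D_def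
      by (simp only: matrix_mul_assoc AK KA)
    then show "colsp (A ** D) \<subseteq> colsp (mpow A (ind A))" using colK by simp
    show "colsp (D ** A) \<subseteq> colsp (mpow A (ind A))"
      unfolding D_def using colK by (simp add: matrix_mul_assoc[symmetric])
    have "A1 ** (A ** D) = A1 ** (D ** A)" unfolding D_def
      by (simp only: matrix_mul_assoc AA1 T1 Y' KA' lassoc[OF T1] lassoc[OF Y'] lassoc[OF AA1] lassoc[OF KA'])
    then show "mpow A (Suc k) ** (A ** D) = mpow A (Suc k) ** (D ** A)" unfolding A1_def .
  qed
  have D3: "D ** A ** D = D" unfolding D_def
    by (simp only: matrix_mul_assoc lassoc[OF AK] D1)
  have D4: "D ** mpow A (Suc (ind A)) = mpow A (ind A)"
    using D1 unfolding D_def A1_def K_def k_def by simp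
  show ?thesis using D2 D3 D4 by blast
qed

lemma drazin_powers:
  assumes "X ** A ** X = X" "A ** X = X ** A"
  shows "X = mpow X (Suc j) ** mpow A j"
proof (induction j)
  case 0 then show ?case by simp
next
  case (Suc j)
  have XX: "X ** X ** A = X" using assms by (metis matrix_mul_assoc)
  have "X = mpow X (Suc j) ** mpow A j" by (rule Suc)
  also have "\<dots> = mpow X j ** X ** mpow A j" by (simp only: mpow_Suc')
  also have "\<dots> = mpow X j ** (X ** X ** A) ** mpow A j" by (simp only: XX)
  also have "\<dots> = (mpow X j ** X ** X) ** (A ** mpow A j)" by (simp only: matrix_mul_assoc)
  also have "\<dots> = mpow X (Suc (Suc j)) ** mpow A (Suc j)" by (simp only: mpow_Suc'[of X] mpow.simps(2)[of A])
  finally show ?case .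
qed

lemma drazin_powers2:
  assumes "X ** A ** X = X" "A ** X = X ** A"
  shows "X ** A = mpow X (Suc j) ** mpow A (Suc j)"
proof -
  have "X ** A = (mpow X (Suc j) ** mpow A j) ** A"
    using drazin_powers[OF assms, of j] by (rule arg_cong)
  also have "\<dots> = mpow X (Suc j) ** mpow A (Suc j)" by (simp only: mpow_Suc' matrix_mul_assoc)
  finally show ?thesis .
qed

lemma drazin_unique:
  assumes 1: "X1 ** A ** X1 = X1" "A ** X1 = X1 ** A" "X1 ** mpow A (Suc k) = mpow A k"
      and 2: "X2 ** A ** X2 = X2" "A ** X2 = X2 ** A" "X2 ** mpow A (Suc k) = mpow A k"
  shows "X1 = X2"
proof -
  have c2: "mpow A (Suc k) ** X2 = X2 ** mpow A (Suc k)" using mpow_comm_gen 2(2) by blast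
  have c2': "mpow A k ** X2 = X2 ** mpow A k" using mpow_comm_gen 2(2) by blast
  have c2'': "mpow X2 (Suc k) ** mpow A k = mpow A k ** mpow X2 (Suc k)"
    by (rule mpow_comm_gen[OF c2'[symmetric]])
  have c2''': "mpow X2 (Suc k) ** mpow A (Suc k) = mpow A (Suc k) ** mpow X2 (Suc k)"
    by (rule mpow_comm_gen[OF c2[symmetric]])
  have "X1 = mpow X1 (Suc k) ** mpow A k" by (rule drazin_powers[OF 1(1,2)])
  also have "\<dots> = mpow X1 (Suc k) ** (X2 ** mpow A (Suc k))" by (simp only: 2(3))
  also have "\<dots> = mpow X1 (Suc k) ** mpow A (Suc k) ** X2" by (simp only: c2[symmetric] matrix_mul_assoc)
  also have "\<dots> = X1 ** A ** X2" by (simp only: drazin_powers2[OF 1(1,2), of k, symmetric])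
  finally have e1: "X1 = X1 ** A ** X2" .
  have "X2 = mpow X2 (Suc k) ** mpow A k" by (rule drazin_powers[OF 2(1,2)])
  also have "\<dots> = mpow A k ** mpow X2 (Suc k)" by (rule c2'')
  also have "\<dots> = X1 ** (mpow A (Suc k) ** mpow X2 (Suc k))" by (simp only: 1(3)[symmetric] matrix_mul_assoc)
  also have "\<dots> = X1 ** (X2 ** A)" by (simp only: c2'''[symmetric] drazin_powers2[OF 2(1,2), of k, symmetric])
  also have "\<dots> = X1 ** A ** X2" by (simp only: 2(2) lassoc[OF 2(2)] matrix_mul_assoc)
  finally show ?thesis using e1 by simp
qed

lemma drazin_props:
  "drazin A ** A ** drazin A = drazin A" "A ** drazin A = drazin A ** A"
  "drazin A ** mpow A (Suc (ind A)) = mpow A (ind A)"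
proof -
  obtain X where X: "X ** A ** X = X \<and> A ** X = X ** A \<and> X ** mpow A (Suc (ind A)) = mpow A (ind A)"
    using drazin_exists by blast
  have "drazin A ** A ** drazin A = drazin A \<and> A ** drazin A = drazin A ** A \<and>
        drazin A ** mpow A (Suc (ind A)) = mpow A (ind A)"
    unfolding drazin_def
    by (rule theI[of _ X]) (use X drazin_unique in blast)+
  then show "drazin A ** A ** drazin A = drazin A" "A ** drazin A = drazin A ** A"
  "drazin A ** mpow A (Suc (ind A)) = mpow A (ind A)" by auto
qed



lemma D_AD: "drazin A ** A = A ** drazin A"
  by (rule sym[OF drazin_props(2)])

lemma D_rep: "drazin A = mpow A (ind A) ** mpow (drazin A) (Suc (ind A))"
proof -
  have c: "mpow A (ind A) ** drazin A = drazin A ** mpow A (ind A)"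
    by (rule mpow_comm_gen[OF drazin_props(2)])
  have c2: "mpow (drazin A) (Suc (ind A)) ** mpow A (ind A) = mpow A (ind A) ** mpow (drazin A) (Suc (ind A))"
    by (rule mpow_comm_gen[OF c[symmetric]])
  have "drazin A = mpow (drazin A) (Suc (ind A)) ** mpow A (ind A)"
    by (rule drazin_powers[OF drazin_props(1,2)])
  also have "\<dots> = mpow A (ind A) ** mpow (drazin A) (Suc (ind A))" by (rule c2)
  finally show ?thesis .
qed

lemma inK_D: "colsp (drazin A ** Z) \<subseteq> colsp (mpow A (ind A))"
proof -
  have "drazin A ** Z = mpow A (ind A) ** (mpow (drazin A) (Suc (ind A)) ** Z)"
    by (subst D_rep) (simp only: matrix_mul_assoc)
  then show ?thesis by (simp add: colsp_mult)
qed

lemma inK_D1: "colsp (drazin A) \<subseteq> colsp (mpow A (ind A))"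
  using inK_D[of A "mat 1"] by simp

lemma ADK: "A ** drazin A ** mpow A (ind A) = mpow A (ind A)"
proof -
  have "A ** drazin A ** mpow A (ind A) = drazin A ** (A ** mpow A (ind A))"
    by (simp only: drazin_props(2) matrix_mul_assoc)
  also have "\<dots> = mpow A (ind A)" using drazin_props(3) by simp
  finally show ?thesis .
qed

lemma ADid: "colsp M \<subseteq> colsp (mpow A (ind A)) \<Longrightarrow> A ** drazin A ** M = M"
  by (rule ident_on[OF ADK])

lemma Dpow_id: "colsp M \<subseteq> colsp (mpow A (ind A)) \<Longrightarrow>
   mpow (drazin A) (Suc j) ** mpow A (Suc j) ** M = M"
proof -
  assume M: "colsp M \<subseteq> colsp (mpow A (ind A))"
  have "mpow (drazin A) (Suc j) ** mpow A (Suc j) = drazin A ** A"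
    by (rule sym[OF drazin_powers2[OF drazin_props(1,2), where j=j]])
  also have "\<dots> = A ** drazin A" by (rule D_AD)
  finally show ?thesis using ADid[OF M] by simp
qed

lemma D_Apow: "ind A \<le> n \<Longrightarrow> drazin A ** mpow A (Suc n) = mpow A n"
proof -
  assume "ind A \<le> n"
  then obtain d where n: "n = ind A + d" using le_Suc_ex by blast
  have "mpow A (Suc n) = mpow A (Suc (ind A)) ** mpow A d"
    unfolding n by (simp only: mpow_add[symmetric] add_Suc)
  then have "drazin A ** mpow A (Suc n) = drazin A ** mpow A (Suc (ind A)) ** mpow A d"
    by (simp only: matrix_mul_assoc)
  also have "\<dots> = mpow A n" unfolding n by (simp only: drazin_props(3) mpow_add)
  finally show ?thesis .
qed

lemma Dpow_pow: "ind A \<le> j \<Longrightarrow> mpow (drazin A) i ** mpow A (i + j) = mpow A j"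
proof (induction i)
  case 0 then show ?case by simp
next
  case (Suc i)
  have "mpow (drazin A) (Suc i) ** mpow A (Suc i + j) = mpow (drazin A) i ** (drazin A ** mpow A (Suc (i + j)))"
    by (simp only: mpow_Suc'[of "drazin A"] matrix_mul_assoc add_Suc)
  also have "\<dots> = mpow (drazin A) i ** mpow A (i + j)" using D_Apow[of A "i + j"] Suc.prems by simp
  finally show ?case using Suc by simp
qed

lemma inK_pow: "colsp M \<subseteq> colsp (mpow A (ind A)) \<Longrightarrow> colsp (mpow A j ** M) \<subseteq> colsp (mpow A (ind A))"
proof -
  assume "colsp M \<subseteq> colsp (mpow A (ind A))"
  then obtain Z where Z: "M = mpow A (ind A) ** Z" using factor by blast
  have "mpow A j ** M = mpow A (ind A) ** (mpow A j ** Z)"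
    unfolding Z by (simp only: matrix_mul_assoc mpow_comm_A[of A j])
  then show ?thesis by (simp add: colsp_mult)
qed

lemma inK_mult: "colsp M \<subseteq> colsp K \<Longrightarrow> colsp (M ** Z) \<subseteq> colsp K"
  using colsp_mult by blast

lemma inK_Apow: "ind A \<le> j \<Longrightarrow> colsp (mpow A j) \<subseteq> colsp (mpow A (ind A))"
  using ind_ge by blast

lemma P1: "proj B ** B = B"
  unfolding proj_def by (rule mp_props(1))

lemma P2: "cstar (proj B) = proj B"
  unfolding proj_def by (rule mp_props(3))

lemma P3: "colsp (proj B) \<subseteq> colsp B"
  unfolding proj_def by (rule colsp_mult)

lemma P4: "colsp M \<subseteq> colsp B \<Longrightarrow> proj B ** M = M"
  by (rule ident_on[OF P1])

lemma P5: "colsp B = colsp C \<Longrightarrow> proj B = proj C"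
proof -
  assume e: "colsp B = colsp C"
  have 1: "proj B ** proj C = proj C" using P4 P3[of C] e by blast
  have 2: "proj C ** proj B = proj B" using P4[of "proj B" C] P3[of B] e by simp
  have "proj B = cstar (proj B)" by (rule sym[OF P2])
  also have "\<dots> = cstar (proj C ** proj B)" by (simp only: 2)
  also have "\<dots> = proj B ** proj C" by (simp add: cstar_mult P2)
  also have "\<dots> = proj C" using 1 by simp
  finally show ?thesis .
qed

lemma P6: "cstar B ** proj B = cstar B"
proof -
  have "cstar (proj B ** B) = cstar B" by (simp add: P1)
  then show ?thesis by (simp add: cstar_mult P2)
qed

lemma P7: "proj B = cstar (mp_inv B) ** cstar B"
proof -
  have "proj B = cstar (proj B)" by (rule sym[OF P2])
  then show ?thesis unfolding proj_def by (simp add: cstar_mult)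
qed

lemma P8: "proj B ** proj B = proj B"
  by (rule P4[OF P3])

lemma coreEP_unique:
  assumes 1: "X1 ** A ** X1 = X1" "colsp X1 = S" "colsp (cstar X1) = S"
      and 2: "X2 ** A ** X2 = X2" "colsp X2 = S" "colsp (cstar X2) = S"
  shows "X1 = X2"
proof -
  have a: "X2 ** A ** X1 = X1" by (rule ident_on[OF 2(1)]) (simp add: 1(2) 2(2))
  have "cstar X1 ** cstar A ** cstar X1 = cstar X1"
    using arg_cong[OF 1(1), of cstar] by (simp add: cstar_mult matrix_mul_assoc)
  then have "cstar X1 ** cstar A ** cstar X2 = cstar X2" by (rule ident_on) (simp add: 1(3) 2(3))
  then have "cstar (X2 ** A ** X1) = cstar X2" by (simp add: cstar_mult matrix_mul_assoc)
  then have "cstar (cstar (X2 ** A ** X1)) = cstar (cstar X2)" by (rule arg_cong)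
  then have "X2 ** A ** X1 = X2" by simp
  then show ?thesis using a by simp
qed

lemma coreEP_eq: "coreEP A = drazin A ** proj (mpow A (ind A))"
proof -
  define D where "D = drazin A"
  define K where "K = mpow A (ind A)"
  define P where "P = proj K"
  define C where "C = D ** P"
  have inK: "colsp (D ** Z) \<subseteq> colsp K" for Z unfolding D_def K_def by (rule inK_D)
  have PK: "colsp P \<subseteq> colsp K" unfolding P_def by (rule P3)
  have e1: "C ** A ** C = C"
  proof -
    have "A ** D = D ** A" unfolding D_def by (rule drazin_props(2))
    then have "colsp (A ** D) \<subseteq> colsp K" using inK by simp
    then have PAD: "P ** (A ** D) = A ** D" unfolding P_def by (rule P4)
    have "C ** A ** C = D ** (P ** (A ** D)) ** P" by (simp only: C_def matrix_mul_assoc)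
    also have "\<dots> = D ** (A ** D) ** P" using PAD by simp
    also have "\<dots> = D ** A ** D ** P" by (simp only: matrix_mul_assoc)
    also have "\<dots> = C" unfolding C_def D_def by (simp only: drazin_props(1))
    finally show ?thesis .
  qed
  have e2: "colsp C = colsp K"
  proof
    show "colsp C \<subseteq> colsp K" unfolding C_def by (rule inK)
    have "P ** mpow A (Suc (ind A)) = mpow A (Suc (ind A))"
      unfolding P_def K_def by (rule P4) (rule inK_Apow, simp)
    then have "C ** mpow A (Suc (ind A)) = K" unfolding C_def K_def D_def
      using drazin_props(3) by (metis matrix_mul_assoc)
    then show "colsp K \<subseteq> colsp C" using factor_colsp by metis
  qed
  have e3: "colsp (cstar C) = colsp K"
  proof
    have "cstar C = P ** cstar D" unfolding C_def P_def by (simp add: cstar_mult P2)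
    then have "colsp (cstar C) \<subseteq> colsp P" by (simp only: colsp_mult)
    then show "colsp (cstar C) \<subseteq> colsp K" using PK by blast
    have "A ** C = P" unfolding C_def D_def K_def P_def
      by (simp add: matrix_mul_assoc ADid[OF P3])
    then have "P = cstar C ** cstar A" using P2[of K] unfolding P_def by (metis cstar_mult)
    then have "colsp P \<subseteq> colsp (cstar C)" using factor_colsp by metis
    moreover have "colsp K \<subseteq> colsp P" using P1[of K] factor_colsp unfolding P_def by metis
    ultimately show "colsp K \<subseteq> colsp (cstar C)" by blast
  qed
  have "coreEP A = C"
    unfolding coreEP_def
  proof (rule the_equality)
    show "C ** A ** C = C \<and> colsp C = colsp (mpow A (ind A)) \<and> colsp (cstar C) = colsp (mpow A (ind A))"
      using e1 e2 e3 K_def by simp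
    fix X assume "X ** A ** X = X \<and> colsp X = colsp (mpow A (ind A)) \<and> colsp (cstar X) = colsp (mpow A (ind A))"
    then show "X = C" using coreEP_unique[of X A _ C] e1 e2 e3 K_def by auto
  qed
  then show ?thesis unfolding C_def D_def P_def K_def .
qed



lemma row_mult: "row i ((B::complex^'n^'m) ** (C::complex^'p^'n)) = transpose C *v row i B"
  by (auto simp: vec_eq_iff row_def matrix_matrix_mult_def matrix_vector_mult_def transpose_def mult.commute intro!: sum.cong)

lemma rank_mult_le: "rank ((B::complex^'n^'m) ** (C::complex^'p^'n)) \<le> rank B"
proof -
  have "rows (B ** C) = (*v) (transpose C) ` rows B"
    by (auto simp: rows_def row_mult)
  then have "rank (B ** C) = vec.dim ((*v) (transpose C) ` rows B)"
    by (simp add: row_rank_def_gen)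
  also have "\<dots> \<le> vec.dim (rows B)"
    by (rule vec.dim_image_le[OF matrix_vector_mul_linear_gen])
  finally show ?thesis by (simp add: row_rank_def_gen)
qed

theorem theorem4p7:
  fixes A A1 :: "complex^'n^'n" and l m k :: nat
  assumes hk: "k = ind A" and hl: "l \<ge> k" and hm: "m \<ge> 1"
    and hA1: "A1 = A ** coreEP A ** A"
  shows "mWC m A ** A ** mWC m A = mWC m A
    \<and> (A1 ** mWC m A ** A1 = A1 \<and> mWC m A ** A1 ** mWC m A = mWC m A)
    \<and> A ** mpow (mWC m A) 2 = mWC m A
    \<and> mWC m A ** mpow A (Suc l) = mpow A l
    \<and> mWC m A = mpow (drazin A) (Suc m) ** proj (mpow A l) ** mpow A m ** proj (mpow A m)
    \<and> mWC m A = mpow A l ** mp_inv (mpow A (l + m + 1)) ** mpow A m ** proj (mpow A m)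
    \<and> rank (mWC m A) = rank (mpow A k)
    \<and> colsp (mWC m A) = colsp (mpow A k)
    \<and> nullsp (mWC m A) = nullsp (cstar (mpow A k) ** mpow A m ** proj (mpow A m))
    \<and> mWC m A ** mpow A (Suc m) = mpow (coreEP A) (Suc m) ** mpow A (2 * m + 1)"
proof -
  define D where "D = drazin A"
  define K where "K = mpow A k"
  define P where "P = proj K"
  define Q where "Q = proj (mpow A m)"
  define C where "C = coreEP A"
  define X where "X = mWC m A"
  obtain m' where m': "m = Suc m'" using hm by (cases m) auto
  have CDP: "C = D ** P" unfolding C_def D_def P_def K_def hk by (rule coreEP_eq)
  have inKD: "colsp (D ** Z) \<subseteq> colsp K" for Z :: "complex^'n^'n" unfolding D_def K_def hk by (rule inK_D)
  have PK: "P ** M = M" if "colsp M \<subseteq> colsp K" for M :: "complex^'n^'n"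
    unfolding P_def using that by (rule P4)
  have QK: "Q ** M = M" if "colsp M \<subseteq> colsp K" for M :: "complex^'n^'n"
    unfolding Q_def by (rule P4) (use that colsp_K_sub[of A m] in \<open>simp add: K_def hk\<close>)
  have DAid: "mpow D (Suc j) ** mpow A (Suc j) ** M = M" if "colsp M \<subseteq> colsp K" for M :: "complex^'n^'n" and j
    unfolding D_def using that unfolding K_def hk by (rule Dpow_id)
  have inKA: "colsp (mpow A j ** M) \<subseteq> colsp K" if "colsp M \<subseteq> colsp K" for M :: "complex^'n^'n" and j
    using that unfolding K_def hk by (rule inK_pow)
  have inKApow: "colsp (mpow A j) \<subseteq> colsp K" if "k \<le> j" for j
    using that unfolding K_def hk by (rule inK_Apow)
  have AD: "A ** D = D ** A" unfolding D_def by (rule drazin_props(2))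
  have PD: "P ** mpow D (Suc j) = mpow D (Suc j)" for j
    by (rule PK) (simp add: inKD)
  have Cpow: "mpow C (Suc j) = mpow D (Suc j) ** P" for j
  proof (induction j)
    case 0 then show ?case by (simp add: CDP)
  next
    case (Suc j)
    have "mpow C (Suc (Suc j)) = C ** mpow C (Suc j)" by (rule mpow.simps(2))
    also have "\<dots> = C ** (mpow D (Suc j) ** P)" by (simp only: Suc.IH)
    also have "\<dots> = D ** P ** (mpow D (Suc j) ** P)" by (simp only: CDP)
    also have "\<dots> = D ** (P ** mpow D (Suc j)) ** P" by (simp only: matrix_mul_assoc)
    also have "\<dots> = mpow D (Suc (Suc j)) ** P" by (simp only: PD) (simp only: mpow.simps(2)[of D])
    finally show ?case .
  qed
  have Xdef: "X = mpow D (Suc m) ** P ** mpow A m ** Q"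
    unfolding X_def mWC_def mWG_def Q_def C_def[symmetric] Cpow by (simp only: matrix_mul_assoc)
  have inKX: "colsp X \<subseteq> colsp K"
  proof -
    have "X = D ** (mpow D m ** P ** mpow A m ** Q)" unfolding Xdef by (simp only: mpow.simps(2) matrix_mul_assoc)
    then show ?thesis using inKD by simp
  qed
  have inKAX: "colsp (A ** X) \<subseteq> colsp K" using inKA[OF inKX, of 1] by simp
  have hd: "X ** mpow A (Suc l') = mpow A l'" if "k \<le> l'" for l'
  proof -
    have q: "Q ** mpow A (Suc l') = mpow A (Suc l')" by (rule QK, rule inKApow) (use that in simp)
    have p: "P ** mpow A (Suc m + l') = mpow A (Suc m + l')" by (rule PK, rule inKApow) (use that in simp)
    have e: "mpow A m ** mpow A (Suc l') = mpow A (Suc m + l')"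
      by (simp only: mpow_add[symmetric]) simp
    have "X ** mpow A (Suc l') = mpow D (Suc m) ** (P ** (mpow A m ** (Q ** mpow A (Suc l'))))"
      unfolding Xdef by (simp only: matrix_mul_assoc)
    also have "\<dots> = mpow D (Suc m) ** mpow A (Suc m + l')" by (simp only: q e p)
    also have "\<dots> = mpow A l'" unfolding D_def by (rule Dpow_pow) (use that hk in simp)
    finally show ?thesis .
  qed
  have ha: "X ** A ** X = X"
  proof -
    have "X ** A ** X = mpow D (Suc m) ** (P ** (mpow A m ** (Q ** (A ** X))))"
      by (subst (1) Xdef) (simp only: matrix_mul_assoc)
    also have "\<dots> = mpow D (Suc m) ** (P ** (mpow A m ** (A ** X)))"
      by (simp only: QK[OF inKAX])
    also have "\<dots> = mpow D (Suc m) ** (P ** (mpow A (Suc m) ** X))"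
      by (simp only: mpow_Suc'[of A] matrix_mul_assoc)
    also have "\<dots> = mpow D (Suc m) ** (mpow A (Suc m) ** X)"
      by (simp only: PK[OF inKA[OF inKX]])
    also have "\<dots> = X" using DAid[OF inKX, of m] by (simp only: matrix_mul_assoc)
    finally show ?thesis .
  qed
  have hc: "A ** mpow X 2 = X"
  proof -
    have ADD: "A ** D ** D = D" unfolding D_def using drazin_props(1,2)[of A] by (metis matrix_mul_assoc)
    have AD1: "A ** mpow D (Suc m) = mpow D m"
      unfolding m' by (simp only: mpow.simps(2) matrix_mul_assoc ADD)
    have "A ** mpow X 2 = A ** X ** X" by (simp add: numeral_2_eq_2 matrix_mul_assoc)
    also have "\<dots> = mpow D m ** (P ** (mpow A m ** (Q ** X)))"
      by (subst (1) Xdef) (simp only: matrix_mul_assoc AD1)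
    also have "\<dots> = mpow D m ** (mpow A m ** X)"
      by (simp only: QK[OF inKX] PK[OF inKA[OF inKX]])
    also have "\<dots> = X" using DAid[OF inKX, of m'] unfolding m' by (simp only: matrix_mul_assoc)
    finally show ?thesis .
  qed
  have CAX: "C ** A ** X = X"
  proof -
    have "C ** A ** X = D ** (P ** (A ** X))" unfolding CDP by (simp only: matrix_mul_assoc)
    also have "\<dots> = D ** (A ** X)" by (simp only: PK[OF inKAX])
    also have "\<dots> = D ** A ** X" by (simp only: matrix_mul_assoc)
    also have "\<dots> = X" using DAid[OF inKX, of 0] by simp
    finally show ?thesis .
  qed
  have XAK: "X ** A ** K = K"
  proof -
    have "X ** mpow A (Suc k) = K" unfolding K_def by (rule hd) simp
    then show ?thesis unfolding K_def by (simp add: matrix_mul_assoc)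
  qed
  have XAC: "X ** A ** C = C" by (rule ident_on[OF XAK]) (simp add: CDP inKD)
  have hb1: "A1 ** X ** A1 = A1"
    unfolding hA1 C_def[symmetric]
    by (simp only: matrix_mul_assoc lassoc3[OF CAX] lassoc3[OF XAC])
  have hb2: "X ** A1 ** X = X"
    unfolding hA1 C_def[symmetric]
    by (simp only: matrix_mul_assoc lassoc3[OF CAX] ha)
  have projl: "proj (mpow A l) = P"
    unfolding P_def K_def hk by (rule P5) (rule ind_ge, use hl hk in simp)
  have he: "X = mpow D (Suc m) ** proj (mpow A l) ** mpow A m ** Q"
    using Xdef projl by simp
  have hf: "X = mpow A l ** mp_inv (mpow A (l + m + 1)) ** mpow A m ** Q"
  proof -
    define G where "G = mpow A (l + m + 1)"
    have projG: "proj G = P"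
      unfolding P_def K_def hk G_def by (rule P5) (rule ind_ge, use hl hk in simp)
    have "mpow A l = mpow D (Suc m) ** mpow A (Suc m + l)"
      unfolding D_def by (rule sym, rule Dpow_pow) (use hl hk in simp)
    also have "\<dots> = mpow D (Suc m) ** G" unfolding G_def by (simp add: add.commute)
    finally have "mpow A l ** mp_inv G = mpow D (Suc m) ** proj G"
      unfolding proj_def by (simp add: matrix_mul_assoc)
    then have "mpow A l ** mp_inv G = mpow D (Suc m) ** P" using projG by simp
    then show ?thesis unfolding Xdef G_def by simp
  qed
  have KX: "K = X ** mpow A (Suc k)" unfolding K_def by (rule sym, rule hd) simp
  have hh: "colsp X = colsp K"
    using inKX factor_colsp[OF KX] by blast
  have hg: "rank X = rank K"
  proof -
    obtain Z where Z: "X = K ** Z" using factor[OF inKX] by blast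
    have "rank X \<le> rank K" unfolding Z by (rule rank_mult_le)
    moreover have "rank K \<le> rank X" by (subst KX) (rule rank_mult_le)
    ultimately show ?thesis by simp
  qed
  have hi: "nullsp X = nullsp (cstar K ** mpow A m ** Q)"
  proof -
    define M where "M = mpow A m ** Q"
    have XM: "X = mpow D (Suc m) ** (P ** M)" unfolding Xdef M_def by (simp only: matrix_mul_assoc)
    have c1: "mpow A (Suc m) ** D = D ** mpow A (Suc m)" by (rule mpow_comm_gen[OF AD])
    have c2: "mpow A (Suc m) ** mpow D (Suc m) = mpow D (Suc m) ** mpow A (Suc m)"
      by (rule sym, rule mpow_comm_gen[OF c1[symmetric]])
    have PinK: "colsp P \<subseteq> colsp K" unfolding P_def by (rule P3)
    have I1: "mpow A (Suc m) ** X = P ** M"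
    proof -
      have "mpow A (Suc m) ** X = (mpow D (Suc m) ** mpow A (Suc m) ** P) ** M"
        unfolding XM by (simp only: matrix_mul_assoc c2)
      also have "\<dots> = P ** M" by (simp only: DAid[OF PinK])
      finally show ?thesis .
    qed
    have I2: "cstar K ** P = cstar K" unfolding P_def by (rule P6)
    have I3: "P = cstar (mp_inv K) ** cstar K" unfolding P_def by (rule P7)
    have "X *v x = 0 \<longleftrightarrow> (cstar K ** M) *v x = 0" for x
    proof
      assume "X *v x = 0"
      then have "(P ** M) *v x = 0" using I1 by (metis matrix_vector_mul_assoc matrix_vector_mult_0_right)
      then have "cstar K *v ((P ** M) *v x) = 0" by simp
      then show "(cstar K ** M) *v x = 0" by (simp add: matrix_vector_mul_assoc matrix_mul_assoc I2)
    next
      assume "(cstar K ** M) *v x = 0"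
      then have "cstar (mp_inv K) *v ((cstar K ** M) *v x) = 0" by simp
      then have "(P ** M) *v x = 0"
        by (simp add: matrix_vector_mul_assoc matrix_mul_assoc I3[symmetric])
      then show "X *v x = 0" unfolding XM by (metis matrix_vector_mul_assoc matrix_vector_mult_0_right)
    qed
    then show ?thesis unfolding nullsp_def M_def by (simp add: matrix_mul_assoc)
  qed
  have hj: "X ** mpow A (Suc m) = mpow C (Suc m) ** mpow A (2 * m + 1)"
  proof -
    have q: "Q ** mpow A m = mpow A m" unfolding Q_def by (rule P1)
    have q2: "Q ** mpow A (Suc m) = mpow A (Suc m)" using q by (simp only: mpow_Suc' matrix_mul_assoc)
    have e: "mpow A m ** mpow A (Suc m) = mpow A (2 * m + 1)"
      by (simp only: mpow_add[symmetric]) (simp add: mult_2)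
    have "X = mpow C (Suc m) ** mpow A m ** Q"
      unfolding X_def mWC_def mWG_def Q_def C_def ..
    then have "X ** mpow A (Suc m) = mpow C (Suc m) ** (mpow A m ** (Q ** mpow A (Suc m)))"
      by (simp only: matrix_mul_assoc)
    also have "\<dots> = mpow C (Suc m) ** mpow A (2 * m + 1)" by (simp only: q2 e)
    finally show ?thesis .
  qed
  show ?thesis
    using ha hb1 hb2 hc hd[OF hl] he hf hg hh hi hj
    unfolding X_def K_def Q_def C_def D_def by simp
qed


end
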